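(* For all $n\in\mathbb{N}$ and $q\ge 2$, $\kappa_{n,q}\ge \lfloor n/2\rfloor$.
   Context: Let $q\ge 2$, $A=\{0,1,\dots,q-1\}$, $[n]=\{1,\dots,n\}$, and let $F(n,q)$ be the set of all maps $A^n\to A^n$. For $f\in F(m,q)$ and $i\in[m]$, $f_i$ is the $i$-th coordinate function and $f^i(x)=(x_1,\dots,x_{i-1},f_i(x),x_{i+1},\dots,x_m)$; for a word $w=(w_1,\dots,w_t)$ over $[m]$, $f^w=f^{w_t}\circ\cdots\circ f^{w_1}$. $\Pi([m])$ is the set of permutations of $[m]$ written as words $(w_1,\dots,w_m)$; $w(i)$ is the position of $i$ in $w$. $\mathrm{pr}_{[n]}:A^m\to A^n$ is the projection onto the first $n$ coordinates. For $m\ge n$, $(f,w)$ with $f\in F(m,q)$, $w\in\Pi([m])$ sequentializes $h\in F(n,q)$ if $\mathrm{pr}_{[n]}\circ f^w=h\circ\mathrm{pr}_{[n]}$. For $u\in\Pi([n])$, $w\in\Pi([m])$ respects $u$ if for all $i,j\in[n]$, $u(i)<u(j)$ implies $w(i)<w(j)$. $\kappa(h,u)$ is the smallest $k\ge0$ such that some $f\in F(n+k,q)$ and $w\in\Pi([n+k])$ respecting $u$ sequentialize $h$. Finally $\kappa_{n,q}=\max\{\kappa(h,u): h\in F(n,q),\ u\in\Pi([n])\}$. *)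

theory Defs
  imports Main
begin

text \<open>Points of A^n, A = {0..q-1}, are lists of length n with entries < q;
  coordinate i (for i in [n] = {1..n}) is the list entry at index i - 1.\<close>
definition space :: "nat \<Rightarrow> nat \<Rightarrow> nat list set" where
  "space n q = {x. length x = n \<and> (\<forall>a\<in>set x. a < q)}"

text \<open>F(n,q): maps A^n to A^n (only their values on A^n matter).\<close>
definition Fmaps :: "nat \<Rightarrow> nat \<Rightarrow> (nat list \<Rightarrow> nat list) set" where
  "Fmaps n q = {f. \<forall>x\<in>space n q. f x \<in> space n q}"

definition upd :: "(nat list \<Rightarrow> nat list) \<Rightarrow> nat \<Rightarrow> nat list \<Rightarrow> nat list" where
  "upd f i x = x[i - 1 := f x ! (i - 1)]"

definition fword :: "(nat list \<Rightarrow> nat list) \<Rightarrow> nat list \<Rightarrow> nat list \<Rightarrow> nat list" where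
  "fword f w = fold (\<lambda>i. upd f i) w"

definition perm_word :: "nat \<Rightarrow> nat list \<Rightarrow> bool" where
  "perm_word m w \<longleftrightarrow> distinct w \<and> set w = {1..m}"

definition pos :: "nat list \<Rightarrow> nat \<Rightarrow> nat" where
  "pos w i = Suc (LEAST k. k < length w \<and> w ! k = i)"

definition respects_perm :: "nat \<Rightarrow> nat list \<Rightarrow> nat list \<Rightarrow> bool" where
  "respects_perm n w u \<longleftrightarrow> (\<forall>i\<in>{1..n}. \<forall>j\<in>{1..n}. pos u i < pos u j \<longrightarrow> pos w i < pos w j)"

text \<open>(f,w) sequentializes h (with m = length of the extended system).\<close>
definition sequentializes :: "nat \<Rightarrow> nat \<Rightarrow> nat \<Rightarrow> (nat list \<Rightarrow> nat list) \<Rightarrow> nat list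
    \<Rightarrow> (nat list \<Rightarrow> nat list) \<Rightarrow> bool" where
  "sequentializes q n m f w h \<longleftrightarrow> (\<forall>x\<in>space m q. take n (fword f w x) = h (take n x))"

definition kappa :: "nat \<Rightarrow> nat \<Rightarrow> (nat list \<Rightarrow> nat list) \<Rightarrow> nat list \<Rightarrow> nat" where
  "kappa n q h u = (LEAST k. \<exists>f\<in>Fmaps (n + k) q. \<exists>w. perm_word (n + k) w \<and> respects_perm n w u
       \<and> sequentializes q n (n + k) f w h)"

definition kappa_max :: "nat \<Rightarrow> nat \<Rightarrow> nat" where
  "kappa_max n q = Max {kappa n q h u | h u. h \<in> Fmaps n q \<and> perm_word n u}"

end

theory Submission
  imports Defs
begin

lemma space_alt: "space m q = {xs. set xs \<subseteq> {..<q} \<and> length xs = m}"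
  unfolding space_def by auto

lemma space_finite: "finite (space m q)"
  unfolding space_alt by (rule finite_lists_length_eq) simp

lemma space_card: "card (space m q) = q ^ m"
  unfolding space_alt by (subst card_lists_length_eq) simp_all

lemma fold_upd_length: "length (fold (upd f) ws x) = length x"
  by (induction ws arbitrary: x) (simp_all add: upd_def)

lemma fold_upd_other: "\<forall>i\<in>set ws. i - 1 \<noteq> t \<Longrightarrow> fold (upd f) ws x ! t = x ! t"
  by (induction ws arbitrary: x) (simp_all add: upd_def)

lemma fold_upd_space: "f \<in> Fmaps m q \<Longrightarrow> x \<in> space m q \<Longrightarrow> fold (upd f) ws x \<in> space m q"
proof (induction ws arbitrary: x)
  case Nil then show ?case by simp
next
  case (Cons i ws)
  have "upd f i x \<in> space m q"
  proof (cases "i - 1 < m")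
    case True
    have "f x \<in> space m q" using Cons.prems unfolding Fmaps_def by auto
    then have "f x ! (i - 1) < q" using True unfolding space_def by auto
    then show ?thesis using Cons.prems(2) unfolding upd_def space_def
      by (auto dest!: set_update_subset_insert[THEN subsetD])
  next
    case False
    then show ?thesis using Cons.prems(2) unfolding upd_def space_def by (auto simp: list_update_beyond not_less)
  qed
  then show ?case using Cons by simp
qed

lemma pos_nth: "distinct w \<Longrightarrow> m < length w \<Longrightarrow> pos w (w ! m) = Suc m"
  unfolding pos_def
  by (rule arg_cong[where f=Suc], rule Least_equality) (auto simp: nth_eq_iff_index_eq)

lemma copy_phase:
  assumes hsp: "\<forall>z\<in>space n q. length (h z) = n"
    and x: "x \<in> space (n+n) q" and j: "j \<le> n"
    and fdef: "f = (\<lambda>y. h (drop n y) @ take n y)"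
  shows "fold (upd f) [Suc n..<Suc n + j] x = take n x @ take j x @ drop (n+j) x"
  using j
proof (induction j)
  case 0 then show ?case using x by (simp add: space_def)
next
  case (Suc j)
  define y where "y = take n x @ take j x @ drop (n+j) x"
  have lx: "length x = n + n" using x by (simp add: space_def)
  have dy: "drop n y = take j x @ drop (n+j) x" using lx Suc.prems by (simp add: y_def)
  have "drop n y \<in> space n q" using x Suc.prems unfolding dy space_def
    by (auto dest: in_set_takeD in_set_dropD)
  then have lh: "length (h (drop n y)) = n" using hsp by blast
  have ly: "length y = n + n" using lx Suc.prems by (simp add: y_def)
  have fy: "f y ! (n + j) = x ! j" using lh Suc.prems lx
    by (simp add: fdef nth_append y_def)
  have "fold (upd f) [Suc n..<Suc n + Suc j] x = upd f (Suc (n+j)) y"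
    using Suc by (simp add: y_def)
  also have "\<dots> = y[n+j := x ! j]" by (simp add: upd_def fy)
  also have "\<dots> = take n x @ take (Suc j) x @ drop (n + Suc j) x"
    using Suc.prems lx
    by (simp add: y_def list_update_append take_Suc_conv_app_nth
        Cons_nth_drop_Suc[symmetric])
  finally show ?case .
qed

lemma compute_phase:
  assumes a: "a \<in> space n q" and hsp: "\<forall>z\<in>space n q. length (h z) = n"
    and fdef: "f = (\<lambda>y. h (drop n y) @ take n y)"
    and u: "set u \<subseteq> {1..n}"
    and z: "length z = n + n" "drop n z = a"
  shows "length (fold (upd f) u z) = n + n \<and> drop n (fold (upd f) u z) = a \<and>
     (\<forall>t<n. fold (upd f) u z ! t = (if Suc t \<in> set u then h a ! t else z ! t))"
  using u z
proof (induction u arbitrary: z)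
  case Nil then show ?case by simp
next
  case (Cons i u)
  have lh: "length (h a) = n" using hsp a by blast
  have i: "1 \<le> i" "i \<le> n" using Cons.prems by auto
  define z' where "z' = z[i - 1 := h a ! (i - 1)]"
  have il: "i - 1 < n" using i by simp
  have uz: "upd f i z = z'" using Cons.prems lh il
    by (simp add: upd_def z'_def fdef nth_append)
  have lz': "length z' = n + n" using Cons.prems by (simp add: z'_def)
  have dz': "drop n z' = a" using Cons.prems i by (simp add: z'_def)
  have IH: "length (fold (upd f) u z') = n + n \<and> drop n (fold (upd f) u z') = a \<and>
     (\<forall>t<n. fold (upd f) u z' ! t = (if Suc t \<in> set u then h a ! t else z' ! t))"
    using Cons.IH Cons.prems lz' dz' by auto
  have fe: "fold (upd f) (i # u) z = fold (upd f) u z'" using uz by simp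
  have "\<forall>t<n. fold (upd f) u z' ! t = (if Suc t \<in> set (i # u) then h a ! t else z ! t)"
  proof (intro allI impI)
    fix t assume t: "t < n"
    show "fold (upd f) u z' ! t = (if Suc t \<in> set (i # u) then h a ! t else z ! t)"
      using IH t i Cons.prems(2) unfolding z'_def by (auto simp: nth_list_update)
  qed
  then show ?case using IH unfolding fe by blast
qed

lemma exists_seq:
  assumes h: "h \<in> Fmaps n q" and u: "perm_word n u"
  shows "\<exists>f\<in>Fmaps (n+n) q. \<exists>w. perm_word (n+n) w \<and> respects_perm n w u
       \<and> sequentializes q n (n+n) f w h"
proof -
  define f where "f = (\<lambda>y. h (drop n y) @ take n y)"
  define w where "w = [Suc n..<Suc (n+n)] @ u"
  have hsp: "\<forall>z\<in>space n q. length (h z) = n" using h unfolding Fmaps_def space_def by auto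
  have du: "distinct u" and su: "set u = {1..n}" using u unfolding perm_word_def by auto
  have fF: "f \<in> Fmaps (n+n) q"
  proof -
    { fix x assume x: "x \<in> space (n+n) q"
      then have "drop n x \<in> space n q" unfolding space_def by (auto dest: in_set_dropD)
      then have "h (drop n x) \<in> space n q" using h unfolding Fmaps_def by auto
      then have "f x \<in> space (n+n) q" using x unfolding f_def space_def
        by (auto dest: in_set_takeD) }
    then show ?thesis unfolding Fmaps_def by auto
  qed
  have pw: "perm_word (n+n) w" unfolding perm_word_def w_def using du su by auto
  have dw: "distinct w" using pw unfolding perm_word_def by auto
  have posw: "pos w i = n + pos u i" if i: "i \<in> {1..n}" for i
  proof -
    obtain m where m: "m < length u" "u ! m = i" using i su by (metis in_set_conv_nth)
    have "w ! (n + m) = i" using m i by (simp add: w_def nth_append del: upt_Suc)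
    moreover have "n + m < length w" using m by (simp add: w_def)
    ultimately have "pos w i = Suc (n + m)" using pos_nth[OF dw] by metis
    moreover have "pos u i = Suc m" using pos_nth[OF du m(1)] m(2) by simp
    ultimately show ?thesis by simp
  qed
  have resp: "respects_perm n w u" unfolding respects_perm_def using posw by auto
  have seq: "sequentializes q n (n+n) f w h" unfolding sequentializes_def
  proof
    fix x assume x: "x \<in> space (n+n) q"
    have lx: "length x = n + n" using x by (simp add: space_def)
    define a where "a = take n x"
    have a: "a \<in> space n q" using x unfolding a_def space_def by (auto dest: in_set_takeD)
    have c: "fold (upd f) [Suc n..<Suc n + n] x = a @ a"
      using copy_phase[OF hsp x le_refl f_def] lx by (simp add: a_def)
    have fw: "fword f w x = fold (upd f) u (a @ a)"
      unfolding fword_def w_def using c by simp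
    have la: "length a = n" using lx by (simp add: a_def)
    have R: "length (fold (upd f) u (a@a)) = n + n \<and> drop n (fold (upd f) u (a@a)) = a \<and>
     (\<forall>t<n. fold (upd f) u (a@a) ! t = (if Suc t \<in> set u then h a ! t else (a@a) ! t))"
      by (rule compute_phase[OF a hsp f_def]) (use su la in auto)
    have lh: "length (h a) = n" using hsp a by blast
    have "take n (fold (upd f) u (a@a)) = h a"
      by (rule nth_equalityI) (use R lh su in auto)
    then show "take n (fword f w x) = h (take n x)" using fw a_def by simp
  qed
  show ?thesis using fF pw resp seq by blast
qed

lemma kappa_le:
  assumes h: "h \<in> Fmaps n q" and u: "perm_word n u"
  shows "kappa n q h u \<le> n"
  unfolding kappa_def by (rule Least_le) (rule exists_seq[OF h u])

definition h0 :: "nat \<Rightarrow> nat list \<Rightarrow> nat list" where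
  "h0 p z = take p (drop p z) @ take p z @ drop (2*p) z"

lemma h0_len: "2*p \<le> length z \<Longrightarrow> length (h0 p z) = length z"
  by (simp add: h0_def)

lemma h0_nth1: "2*p \<le> length z \<Longrightarrow> t < p \<Longrightarrow> h0 p z ! t = z ! (p + t)"
  by (simp add: h0_def nth_append)

lemma h0_nth2: "2*p \<le> length z \<Longrightarrow> t < p \<Longrightarrow> h0 p z ! (p + t) = z ! t"
  by (simp add: h0_def nth_append)

lemma h0_F: "2*p \<le> n \<Longrightarrow> h0 p \<in> Fmaps n q"
  unfolding Fmaps_def space_def h0_def
  by (auto dest: in_set_takeD in_set_dropD)

lemma pos_u0: "i \<in> {1..n} \<Longrightarrow> pos [1..<Suc n] i = i"
proof -
  assume i: "i \<in> {1..n}"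
  have "[1..<Suc n] ! (i - 1) = i" using i by (simp del: upt_Suc)
  moreover have "i - 1 < length [1..<Suc n]" using i by (auto simp del: upt_Suc)
  ultimately show ?thesis using pos_nth[of "[1..<Suc n]" "i - 1"] i by (simp del: upt_Suc)
qed

lemma lower:
  assumes q: "q \<ge> 2" and p: "2*p \<le> n"
    and fF: "f \<in> Fmaps (n+k) q" and pw: "perm_word (n+k) w"
    and resp: "respects_perm n w [1..<Suc n]"
    and seq: "sequentializes q n (n+k) f w (h0 p)"
  shows "p \<le> k"
proof (cases "p = 0")
  case True then show ?thesis by simp
next
  case False
  have dw: "distinct w" and sw: "set w = {1..n+k}" using pw unfolding perm_word_def by auto
  have "p \<in> set w" using False p sw by auto
  then obtain k0 where k0: "k0 < length w" "w ! k0 = p" by (metis in_set_conv_nth)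
  define w1 where "w1 = take (Suc k0) w"
  define w2 where "w2 = drop (Suc k0) w"
  have ww: "w = w1 @ w2" by (simp add: w1_def w2_def)
  have disj: "set w1 \<inter> set w2 = {}" unfolding w1_def w2_def
    by (rule set_take_disj_set_drop_if_distinct[OF dw]) simp
  have pk0: "pos w p = Suc k0" using pos_nth[OF dw k0(1)] k0(2) by simp
  have A: "i \<in> set w1" if i: "i \<in> {1..p}" for i
  proof -
    have "i \<in> set w" using i p sw by auto
    then obtain m where m: "m < length w" "w ! m = i" by (metis in_set_conv_nth)
    have pm: "pos w i = Suc m" using pos_nth[OF dw m(1)] m(2) by simp
    have "m \<le> k0"
    proof (cases "i = p")
      case True then have "m = k0" using m k0 dw by (metis nth_eq_iff_index_eq)
      then show ?thesis by simp
    next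
      case False
      then have "pos [1..<Suc n] i < pos [1..<Suc n] p" using i p pos_u0[of i n] pos_u0[of p n]
        by (auto simp del: upt_Suc)
      then have "pos w i < pos w p" using resp i p False unfolding respects_perm_def by auto
      then show ?thesis using pm pk0 by simp
    qed
    then have "m < length w1" "w1 ! m = i" using m by (auto simp: w1_def)
    then show ?thesis by (metis nth_mem)
  qed
  have B: "j \<notin> set w1" if j: "j \<in> {Suc p..n}" for j
  proof -
    have "j \<in> set w" using j p sw by auto
    then obtain m where m: "m < length w" "w ! m = j" by (metis in_set_conv_nth)
    have pm: "pos w j = Suc m" using pos_nth[OF dw m(1)] m(2) by simp
    have "pos [1..<Suc n] p < pos [1..<Suc n] j" using j p False pos_u0[of j n] pos_u0[of p n]
      by (auto simp del: upt_Suc)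
    then have "pos w p < pos w j" using resp j p False unfolding respects_perm_def by auto
    then have "Suc k0 \<le> m" using pm pk0 by simp
    then have "m - Suc k0 < length w2" "w2 ! (m - Suc k0) = j" using m by (auto simp: w2_def)
    then have "j \<in> set w2" by (metis nth_mem)
    then show ?thesis using disj by auto
  qed
  have C: "i \<notin> set w2" if "i \<in> {1..p}" for i using A[OF that] disj by auto
  have sw1: "set w1 \<subseteq> {1..n+k}" and sw2: "set w2 \<subseteq> {1..n+k}"
    using sw ww by auto
  define c where "c = replicate (n+k-p) (0::nat)"
  define y where "y a = fold (upd f) w1 (a @ c)" for a
  define g where "g a = drop n (y a)" for a
  have key: "take n (y a) = replicate n 0 \<and> g a \<in> space k q \<and>
      (\<forall>t<p. fword f w (a@c) ! (p+t) = a ! t) \<and> fword f w (a@c) = fold (upd f) w2 (y a)"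
    if a: "a \<in> space p q" for a
  proof -
    have la: "length a = p" using a by (simp add: space_def)
    have x: "a @ c \<in> space (n+k) q" using a q p la unfolding space_def c_def by auto
    have lx: "length (a @ c) = n + k" using x by (simp add: space_def)
    define z where "z = take n (a @ c)"
    have lz: "length z = n" using lx by (simp add: z_def)
    have fw: "fword f w (a@c) = fold (upd f) w2 (y a)" unfolding fword_def ww y_def by simp
    have S: "take n (fword f w (a@c)) = h0 p z"
      using seq x unfolding sequentializes_def z_def by blast
    have ya: "y a \<in> space (n+k) q" unfolding y_def by (rule fold_upd_space[OF fF x])
    then have ly: "length (y a) = n + k" by (simp add: space_def)
    have zt: "z ! t = 0" if "p \<le> t" "t < n" for t
      using that la lx by (simp add: z_def c_def nth_append)
    have D1: "y a ! t = 0" if t: "t < p" for t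
    proof -
      have "y a ! t = fword f w (a@c) ! t" unfolding fw
        by (rule fold_upd_other[symmetric]) (use C t sw2 in force)
      also have "\<dots> = take n (fword f w (a@c)) ! t" using t p by simp
      also have "\<dots> = 0" unfolding S using t p lz by (simp add: h0_nth1 zt)
      finally show ?thesis .
    qed
    have D2: "y a ! t = 0" if t: "p \<le> t" "t < n" for t
    proof -
      have "y a ! t = (a @ c) ! t" unfolding y_def
        by (rule fold_upd_other) (use B t sw1 in force)
      then show ?thesis using t la lx by (simp add: c_def nth_append)
    qed
    have T: "take n (y a) = replicate n 0"
    proof (rule nth_equalityI)
      show "length (take n (y a)) = length (replicate n (0::nat))" using ly by simp
      fix t assume "t < length (take n (y a))"
      then show "take n (y a) ! t = replicate n 0 ! t" using D1 D2 ly by (cases "t < p") auto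
    qed
    have G: "g a \<in> space k q" using ya unfolding g_def space_def by (auto dest: in_set_dropD)
    have "fword f w (a@c) ! (p+t) = a ! t" if t: "t < p" for t
    proof -
      have "fword f w (a@c) ! (p+t) = take n (fword f w (a@c)) ! (p+t)" using t p by simp
      also have "\<dots> = z ! t" unfolding S using t lz p by (simp add: h0_nth2)
      also have "\<dots> = a ! t" using t la p by (simp add: z_def nth_append)
      finally show ?thesis .
    qed
    then show ?thesis using T G fw by blast
  qed
  have inj: "inj_on g (space p q)"
  proof
    fix a a' assume a: "a \<in> space p q" and a': "a' \<in> space p q" and e: "g a = g a'"
    have "y a = y a'"
      using key[OF a] key[OF a'] e unfolding g_def by (metis append_take_drop_id)
    then have "fword f w (a@c) = fword f w (a'@c)" using key[OF a] key[OF a'] by simp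
    then have "\<forall>t<p. a ! t = a' ! t" using key[OF a] key[OF a'] by metis
    then show "a = a'" using a a' by (intro nth_equalityI) (auto simp: space_def)
  qed
  have "card (space p q) \<le> card (space k q)"
    by (rule card_inj_on_le[OF inj]) (use key in \<open>auto simp: space_finite\<close>)
  then have "q ^ p \<le> q ^ k" by (simp add: space_card)
  then show ?thesis using q by (simp add: power_le_imp_le_exp)
qed

theorem mainTheorem2:
  fixes n q :: nat
  assumes "q \<ge> 2"
  shows "kappa_max n q \<ge> n div 2"
proof -
  define p where "p = n div 2"
  have p2: "2 * p \<le> n" unfolding p_def by simp
  define S where "S = {kappa n q h u | h u. h \<in> Fmaps n q \<and> perm_word n u}"
  have fin: "finite S"
    by (rule finite_subset[of _ "{..n}"]) (auto simp: S_def dest: kappa_le)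
  have hF: "h0 p \<in> Fmaps n q" using h0_F[OF p2] .
  have uP: "perm_word n [1..<Suc n]" unfolding perm_word_def by auto
  have mem: "kappa n q (h0 p) [1..<Suc n] \<in> S" unfolding S_def using hF uP by blast
  have "\<exists>k. \<exists>f\<in>Fmaps (n + k) q. \<exists>w. perm_word (n + k) w \<and> respects_perm n w [1..<Suc n]
       \<and> sequentializes q n (n + k) f w (h0 p)"
    using exists_seq[OF hF uP] by blast
  then have "\<exists>f\<in>Fmaps (n + kappa n q (h0 p) [1..<Suc n]) q. \<exists>w.
       perm_word (n + kappa n q (h0 p) [1..<Suc n]) w \<and> respects_perm n w [1..<Suc n]
       \<and> sequentializes q n (n + kappa n q (h0 p) [1..<Suc n]) f w (h0 p)"
    unfolding kappa_def by (rule LeastI_ex)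
  then have ge: "p \<le> kappa n q (h0 p) [1..<Suc n]"
    using lower[OF assms p2] by blast
  have "kappa n q (h0 p) [1..<Suc n] \<le> Max S" using Max_ge[OF fin mem] .
  then show ?thesis using ge unfolding kappa_max_def S_def[symmetric] p_def by simp
qed

end
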